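(* For Variant 1 of the generalized one-way trading problem under Assumption A with $0<L<U$, the optimal competitive ratio (smallest competitive ratio achievable by an online algorithm) is the solution $\alpha^*>1$ of $\alpha^*=\ln\frac{U-L}{\alpha^*L-L}$.
   Context: Variant 1: a single knapsack of capacity $C$; items $n=1,\dots,N$ arrive one at a time; item $n$ has size $D_n>0$ and value function $g_n:[0,D_n]\to\mathbb R_{\ge0}$, revealed on arrival. Any remaining capacity at the end is filled at the lowest marginal value $L$: the offline problem is $\max\sum_n g_n(y_n)+(C-\sum_n y_n)L$ s.t. $\sum_n y_n\le C$, $0\le y_n\le D_n$, and an online algorithm choosing $y_1,\dots,y_N$ earns $\sum_n g_n(y_n)+(C-\sum_n y_n)L$. Assumption A: each $g_n$ is non-decreasing, differentiable, concave, $g_n(0)=0$, $L\le g_n'\le U$, with $C,L,U$ known. An online algorithm irrevocably chooses $y_n$ on arrival using only items $1,\dots,n$ and $C,L,U$; competitive ratio is $\sup_{\mathcal I}\mathrm{OPT}/\mathrm{ALG}$ over instances satisfying Assumption A. *)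

theory Defs
  imports "HOL-Analysis.Analysis"
begin

text \<open>An item is a pair (D, g): its size D and its value function g
  (only the values of g on [0, D] are relevant).  An instance is the list of
  items in arrival order.\<close>

type_synonym item = "real \<times> (real \<Rightarrow> real)"

definition valid_item :: "real \<Rightarrow> real \<Rightarrow> item \<Rightarrow> bool" where
  "valid_item L U it \<longleftrightarrow>
     (let D = fst it; g = snd it in
        D > 0 \<and> g 0 = 0 \<and> mono_on {0..D} g \<and> concave_on {0..D} g \<and>
        (\<forall>x\<in>{0..D}. \<exists>d. (g has_real_derivative d) (at x within {0..D})
                         \<and> L \<le> d \<and> d \<le> U))"

definition valid_instance :: "real \<Rightarrow> real \<Rightarrow> item list \<Rightarrow> bool" where
  "valid_instance L U I \<longleftrightarrow> (\<forall>it\<in>set I. valid_item L U it)"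

definition feasible_alloc :: "real \<Rightarrow> item list \<Rightarrow> (nat \<Rightarrow> real) \<Rightarrow> bool" where
  "feasible_alloc C I y \<longleftrightarrow>
     (\<forall>n<length I. 0 \<le> y n \<and> y n \<le> fst (I ! n)) \<and> (\<Sum>n<length I. y n) \<le> C"

definition objective :: "real \<Rightarrow> real \<Rightarrow> item list \<Rightarrow> (nat \<Rightarrow> real) \<Rightarrow> real" where
  "objective C L I y = (\<Sum>n<length I. snd (I ! n) (y n)) + (C - (\<Sum>n<length I. y n)) * L"

definition OPT :: "real \<Rightarrow> real \<Rightarrow> item list \<Rightarrow> real" where
  "OPT C L I = Sup (objective C L I ` {y. feasible_alloc C I y})"

text \<open>A deterministic online algorithm maps the sequence of items revealed so far
  (including the current one) to the irrevocable decision for the current item.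
  It may depend on C, L, U since it is chosen after these are fixed.\<close>
type_synonym online_alg = "item list \<Rightarrow> real"

definition online_decisions :: "online_alg \<Rightarrow> item list \<Rightarrow> nat \<Rightarrow> real" where
  "online_decisions A I = (\<lambda>n. A (take (Suc n) I))"

definition ALG :: "real \<Rightarrow> real \<Rightarrow> online_alg \<Rightarrow> item list \<Rightarrow> real" where
  "ALG C L A I = objective C L I (online_decisions A I)"

definition feasible_online :: "real \<Rightarrow> real \<Rightarrow> real \<Rightarrow> online_alg \<Rightarrow> bool" where
  "feasible_online C L U A \<longleftrightarrow>
     (\<forall>I. valid_instance L U I \<longrightarrow> feasible_alloc C I (online_decisions A I))"

definition competitive_ratio :: "real \<Rightarrow> real \<Rightarrow> real \<Rightarrow> online_alg \<Rightarrow> ereal" where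
  "competitive_ratio C L U A =
     (SUP I\<in>{I. valid_instance L U I}. ereal (OPT C L I / ALG C L A I))"

end

theory Submission
  imports Defs
begin
lemma alpha_exists:
  fixes L U :: real
  assumes "0 < L" "L < U"
  shows "\<exists>!\<alpha>. \<alpha> > 1 \<and> \<alpha> = ln ((U - L) / (\<alpha> * L - L))"
proof -
  define F where "F t = t - ln ((U - L) / (t * L - L))" for t
  have mono: "F s < F t" if "1 < s" "s < t" for s t
  proof -
    have "s * L - L < t * L - L" using that assms by (simp add: algebra_simps)
    moreover have "0 < s * L - L" using that assms by (simp add: algebra_simps)
    ultimately have "(U - L) / (t * L - L) < (U - L) / (s * L - L)"
      using assms by (intro divide_strict_left_mono) auto
    moreover have "0 < (U - L) / (t * L - L)" using that assms \<open>0 < s * L - L\<close> by auto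
    ultimately have "ln ((U - L) / (t * L - L)) < ln ((U - L) / (s * L - L))" by simp
    then show ?thesis unfolding F_def using that by simp
  qed
  define \<epsilon> where "\<epsilon> = min 1 ((U - L) / L) * exp (- 3)"
  have e0: "0 < \<epsilon>" using assms by (simp add: \<epsilon>_def)
  have e1: "\<epsilon> \<le> exp (-3)" unfolding \<epsilon>_def by (simp add: mult_le_cancel_right1)
  have "exp (-3::real) < 1" by simp
  have e2': "\<epsilon> \<le> (U - L) / L * exp (-3)" unfolding \<epsilon>_def by (rule mult_right_mono) auto
  have e2: "\<epsilon> * L \<le> (U - L) * exp (-3)"
    using mult_right_mono[OF e2', of L] assms by simp
  have e3: "\<epsilon> < (U - L) / L"
  proof -
    have "\<epsilon> \<le> (U - L) / L * exp (-3)" by (rule e2')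
    also have "\<dots> < (U - L) / L * 1" using assms \<open>exp (-3::real) < 1\<close>
      by (intro mult_strict_left_mono) auto
    finally show ?thesis by simp
  qed
  define a where "a = 1 + \<epsilon>"
  define b where "b = U / L"
  have a1: "1 < a" using e0 by (simp add: a_def)
  have ab: "a \<le> b" using e3 assms by (simp add: a_def b_def field_simps)
  have Fa: "F a \<le> 0"
  proof -
    have "a * L - L = \<epsilon> * L" by (simp add: a_def algebra_simps)
    have "exp 3 \<le> (U - L) / (\<epsilon> * L)"
      using e2 e0 assms by (simp add: field_simps exp_minus)
    hence "ln (exp 3) \<le> ln ((U - L) / (\<epsilon> * L))" using e0 assms by (subst ln_le_cancel_iff) auto
    hence "3 \<le> ln ((U - L) / (a * L - L))" using \<open>a * L - L = \<epsilon> * L\<close> by simp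
    moreover have "a \<le> 2" using e1 \<open>exp (-3::real) < 1\<close> unfolding a_def by linarith
    ultimately show ?thesis by (simp add: F_def)
  qed
  have Fb: "0 \<le> F b"
  proof -
    have "b * L - L = U - L" using assms by (simp add: b_def)
    thus ?thesis using assms by (simp add: F_def b_def)
  qed
  have "\<exists>x. a \<le> x \<and> x \<le> b \<and> F x = 0"
  proof (rule IVT[OF Fa Fb ab], intro allI impI)
    fix x assume x: "a \<le> x \<and> x \<le> b"
    hence "0 < x * L - L" using a1 assms by (simp add: algebra_simps)
    hence "0 < (U - L) / (x * L - L)" using assms by simp
    thus "isCont F x" unfolding F_def using \<open>0 < x * L - L\<close>
      by (intro continuous_intros) auto
  qed
  then obtain x where x: "a \<le> x" "F x = 0" by blast
  show ?thesis
  proof (rule ex1I[of _ x])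
    show "x > 1 \<and> x = ln ((U - L) / (x * L - L))" using x a1 by (simp add: F_def)
  next
    fix y assume y: "y > 1 \<and> y = ln ((U - L) / (y * L - L))"
    hence "F y = 0" by (simp add: F_def)
    show "y = x"
    proof (rule ccontr)
      assume "y \<noteq> x"
      hence "y < x \<or> x < y" by auto
      thus False using mono[of y x] mono[of x y] y x a1 \<open>F y = 0\<close> by auto
    qed
  qed
qed

lemma valid_lin:
  fixes L U p D :: real
  assumes "0 \<le> L" "L \<le> p" "p \<le> U" "0 < D"
  shows "valid_item L U (D, \<lambda>y. p * y)"
proof -
  have "mono_on {0..D} (\<lambda>y. p * y)"
    using assms by (intro mono_onI) (auto intro: mult_left_mono)
  moreover have "concave_on {0..D} (\<lambda>y. p * y)"
    unfolding concave_on_iff by (auto simp: algebra_simps)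
  moreover have "\<forall>x\<in>{0..D}. \<exists>d. ((\<lambda>y. p * y) has_real_derivative d) (at x within {0..D}) \<and> L \<le> d \<and> d \<le> U"
    using assms by (auto intro!: exI[of _ p] derivative_eq_intros)
  ultimately show ?thesis using assms unfolding valid_item_def by (simp add: Let_def)
qed

lemma bdd_obj:
  assumes "valid_instance L U I" "0 \<le> L"
  shows "bdd_above (objective C L I ` {y. feasible_alloc C I y})"
proof (rule bdd_aboveI2)
  fix y assume "y \<in> {y. feasible_alloc C I y}"
  hence fy: "\<forall>n<length I. 0 \<le> y n \<and> y n \<le> fst (I ! n)" "(\<Sum>n<length I. y n) \<le> C"
    by (auto simp: feasible_alloc_def)
  have "(\<Sum>n<length I. snd (I ! n) (y n)) \<le> (\<Sum>n<length I. snd (I ! n) (fst (I ! n)))"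
  proof (rule sum_mono)
    fix n assume "n \<in> {..<length I}"
    hence "valid_item L U (I ! n)" "0 \<le> y n" "y n \<le> fst (I ! n)" using assms fy
      by (auto simp: valid_instance_def)
    thus "snd (I ! n) (y n) \<le> snd (I ! n) (fst (I ! n))"
      unfolding valid_item_def Let_def by (auto elim!: mono_onD)
  qed
  moreover have "0 \<le> (\<Sum>n<length I. y n)" using fy by (auto intro: sum_nonneg)
  hence "(C - (\<Sum>n<length I. y n)) * L \<le> C * L" using assms by (simp add: mult_right_mono)
  ultimately show "objective C L I y \<le> (\<Sum>n<length I. snd (I ! n) (fst (I ! n))) + C * L"
    unfolding objective_def by linarith
qed

lemma OPT_ge:
  assumes "valid_instance L U I" "0 \<le> L" "feasible_alloc C I y"
  shows "objective C L I y \<le> OPT C L I"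
  unfolding OPT_def using assms bdd_obj[OF assms(1,2)] by (intro cSup_upper) auto

lemma lower_bound:
  fixes C L U \<alpha> :: real
  assumes C: "C > 0" and L: "0 < L" "L < U" and a1: "\<alpha> > 1"
    and aeq: "\<alpha> = ln ((U - L) / (\<alpha> * L - L))"
    and feas: "feasible_online C L U A"
  shows "ereal \<alpha> \<le> competitive_ratio C L U A"
proof (rule ccontr)
  assume "\<not> ereal \<alpha> \<le> competitive_ratio C L U A"
  hence lt: "competitive_ratio C L U A < ereal \<alpha>" by simp
  obtain r where r1: "1 < r" and ra: "r < \<alpha>" and rCR: "competitive_ratio C L U A \<le> ereal r"
  proof (cases "competitive_ratio C L U A")
    case (real c)
    show ?thesis using that[of "(max c 1 + \<alpha>) / 2"] lt real a1 by auto
  next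
    case PInf thus ?thesis using lt by simp
  next
    case MInf thus ?thesis using that[of "(1 + \<alpha>) / 2"] a1 by auto
  qed
  have ratio: "OPT C L J / ALG C L A J \<le> r" if "valid_instance L U J" for J
  proof -
    have "ereal (OPT C L J / ALG C L A J) \<le> competitive_ratio C L U A"
      unfolding competitive_ratio_def using that by (intro SUP_upper) auto
    from order_trans[OF this rCR] show ?thesis by simp
  qed
  define q0 where "q0 = (r - 1) * L"
  have q0: "0 < q0" using r1 L by (simp add: q0_def)
  define M where "M = (U - L) / q0"
  define lM where "lM = ln M"
  have lMr: "r < lM"
  proof -
    have "q0 < \<alpha> * L - L" using ra L by (simp add: q0_def algebra_simps)
    hence "ln q0 < ln (\<alpha> * L - L)" using q0 by simp
    moreover have "\<alpha> = ln (U - L) - ln (\<alpha> * L - L)"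
    proof -
      have "0 < \<alpha> * L - L" using \<open>q0 < \<alpha> * L - L\<close> q0 by linarith
      moreover have "0 < U - L" using L by simp
      ultimately have "ln ((U - L) / (\<alpha> * L - L)) = ln (U - L) - ln (\<alpha> * L - L)"
        using L by (simp add: ln_divide_pos)
      thus ?thesis using aeq by simp
    qed
    moreover have "lM = ln (U - L) - ln q0" using q0 L by (simp add: lM_def M_def ln_divide_pos)
    ultimately show ?thesis using ra by linarith
  qed
  have lM0: "0 < lM" using lMr r1 by simp
  define m :: nat where "m = nat \<lceil>r * lM / (lM - r)\<rceil> + 1"
  have m1: "1 \<le> m" by (simp add: m_def)
  have "r * lM / (lM - r) < real m" unfolding m_def by linarith
  hence mm: "r * (real m + lM) < lM * real m" using lMr by (simp add: field_simps)
  define x where "x = lM / real m"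
  have x0: "0 < x" using lM0 m1 by (simp add: x_def)
  define \<rho> where "\<rho> = exp x"
  define Q where "Q n = q0 * exp (x * real n)" for n :: nat
  define P where "P n = L + Q n" for n :: nat
  have Qpos: "0 < Q n" for n using q0 by (simp add: Q_def)
  have Q0: "Q 0 = q0" by (simp add: Q_def)
  have QS: "Q (Suc n) = \<rho> * Q n" for n
    by (simp add: Q_def \<rho>_def distrib_left exp_add)
  have Qm: "Q m = U - L"
  proof -
    have "x * real m = lM" using m1 by (simp add: x_def)
    hence "exp (x * real m) = M" using q0 L by (simp add: lM_def M_def)
    thus ?thesis using q0 by (simp add: Q_def M_def)
  qed
  have Qle: "Q n \<le> U - L" if "n \<le> m" for n
  proof -
    have "exp (x * real n) \<le> exp (x * real m)" using that x0 by (simp add: mult_left_mono)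
    hence "q0 * exp (x * real n) \<le> q0 * exp (x * real m)" using q0 by simp
    thus ?thesis using Qm by (simp add: Q_def)
  qed
  have Pb: "L \<le> P n" "P n \<le> U" if "n \<le> m" for n
    using Qpos[of n] Qle[OF that] by (auto simp: P_def)
  define it where "it n = (C, \<lambda>y. P n * y)" for n
  define I where "I = map it [0..<Suc m]"
  have takeI: "take k I = map it [0..<k]" if "k \<le> Suc m" for k
    using that by (simp add: I_def take_map take_upt del: upt_Suc)
  have nthI: "I ! n = it n" if "n < Suc m" for n
    using that unfolding I_def by (simp del: upt_Suc)
  have validk: "valid_instance L U (take k I)" if "k \<le> Suc m" for k
    unfolding takeI[OF that] valid_instance_def it_def
    using Pb L C that by (auto intro!: valid_lin)
  define s where "s n = A (take (Suc n) I)" for n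
  define W where "W k = (\<Sum>n<k. s n)" for k
  define T where "T k = (\<Sum>n<k. Q n * s n)" for k
  have od: "online_decisions A (take k I) n = s n" if "n < k" for k n
    using that by (simp add: online_decisions_def s_def min_def)
  have facts: "(\<forall>n<k. 0 \<le> s n) \<and> W k \<le> C \<and> ALG C L A (take k I) = L * C + T k"
    if "k \<le> Suc m" for k
  proof -
    have len: "length (take k I) = k" using that by (simp add: takeI)
    have nth: "take k I ! n = it n" if "n < k" for n using that \<open>k \<le> Suc m\<close> by (simp add: takeI)
    have fa: "feasible_alloc C (take k I) (online_decisions A (take k I))"
      using feas validk[OF that] by (simp add: feasible_online_def)
    hence "\<forall>n<k. 0 \<le> s n" "W k \<le> C"
      unfolding feasible_alloc_def len W_def using od by auto
    moreover have "ALG C L A (take k I) = (\<Sum>n<k. P n * s n) + (C - W k) * L"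
      unfolding ALG_def objective_def len W_def
      using that by (intro arg_cong2[where f="(+)"] sum.cong) (auto simp: nth od it_def nthI)
    moreover have "(\<Sum>n<k. P n * s n) = L * W k + T k"
      by (simp add: P_def W_def T_def distrib_right sum.distrib sum_distrib_left)
    ultimately show ?thesis by (simp add: algebra_simps)
  qed
  have Tb: "C / r * (Q j - q0) \<le> T (Suc j)" if "j \<le> m" for j
  proof -
    have k: "Suc j \<le> Suc m" using that by simp
    have len: "length (take (Suc j) I) = Suc j" using k by (simp add: takeI)
    have nth: "take (Suc j) I ! n = it n" if "n < Suc j" for n using that k by (simp add: nthI)
    define y0 where "y0 n = (if n = j then C else 0)" for n
    have "feasible_alloc C (take (Suc j) I) y0"
      unfolding feasible_alloc_def len using C k by (auto simp: y0_def nthI it_def)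
    hence "objective C L (take (Suc j) I) y0 \<le> OPT C L (take (Suc j) I)"
      using validk[OF k] L by (intro OPT_ge) auto
    moreover have "objective C L (take (Suc j) I) y0 = P j * C"
    proof -
      have "(\<Sum>n<Suc j. snd (take (Suc j) I ! n) (y0 n)) = P j * C"
        using k by (simp add: nth it_def y0_def nthI)
      moreover have "(\<Sum>n<Suc j. y0 n) = C" by (simp add: y0_def)
      ultimately show ?thesis unfolding objective_def len by simp
    qed
    moreover have "ALG C L A (take (Suc j) I) = L * C + T (Suc j)" using facts[OF k] by simp
    moreover have "0 \<le> T (Suc j)" using facts[OF k] Qpos unfolding T_def
      by (intro sum_nonneg) (simp add: less_imp_le)
    hence "0 < L * C + T (Suc j)" using mult_pos_pos[OF L(1) C] by linarith
    moreover have "OPT C L (take (Suc j) I) / ALG C L A (take (Suc j) I) \<le> r"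
      using ratio validk k by blast
    ultimately have "P j * C \<le> r * (L * C + T (Suc j))"
      by (simp add: pos_divide_le_eq)
    hence "C * (Q j - q0) \<le> r * T (Suc j)"
      by (simp add: P_def q0_def algebra_simps)
    thus ?thesis using r1 by (simp add: field_simps)
  qed
  have inv: "C / r * (real j * (1 - 1 / \<rho>) - 1 + q0 / Q j) \<le> W (Suc j) - T (Suc j) / Q j"
    if "j \<le> m" for j
    using that
  proof (induction j)
    case 0
    show ?case using q0 by (simp add: W_def T_def Q0)
  next
    case (Suc j)
    have IH: "C / r * (real j * (1 - 1 / \<rho>) - 1 + q0 / Q j) \<le> W (Suc j) - T (Suc j) / Q j"
      using Suc by simp
    have Tj: "C / r * (Q j - q0) \<le> T (Suc j)" using Tb Suc by simp
    have rho1: "1 \<le> \<rho>" using x0 by (simp add: \<rho>_def)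
    have d0: "0 \<le> 1 / Q j - 1 / Q (Suc j)" using rho1 Qpos[of j] QS[of j]
      by (simp add: field_simps)
    have "W (Suc (Suc j)) - T (Suc (Suc j)) / Q (Suc j) = W (Suc j) - T (Suc j) / Q (Suc j)"
      using Qpos[of "Suc j"] by (simp add: W_def T_def field_simps)
    also have "\<dots> = (W (Suc j) - T (Suc j) / Q j) + T (Suc j) * (1 / Q j - 1 / Q (Suc j))"
      by (simp add: algebra_simps)
    also have "\<dots> \<ge> C / r * (real j * (1 - 1 / \<rho>) - 1 + q0 / Q j) + C / r * (Q j - q0) * (1 / Q j - 1 / Q (Suc j))"
      using IH mult_right_mono[OF Tj d0] by linarith
    finally have *: "C / r * (real j * (1 - 1 / \<rho>) - 1 + q0 / Q j) + C / r * (Q j - q0) * (1 / Q j - 1 / Q (Suc j))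
       \<le> W (Suc (Suc j)) - T (Suc (Suc j)) / Q (Suc j)" .
    have "C / r * (real j * (1 - 1 / \<rho>) - 1 + q0 / Q j) + C / r * (Q j - q0) * (1 / Q j - 1 / Q (Suc j))
      = C / r * (real (Suc j) * (1 - 1 / \<rho>) - 1 + q0 / Q (Suc j))"
      using Qpos[of j] rho1 r1 unfolding QS by (simp add: field_simps)
    thus ?case using * by simp
  qed
  have fin: "C / r * (real m * (1 - 1 / \<rho>)) \<le> C"
  proof -
    have "C / r * (real m * (1 - 1 / \<rho>) - 1 + q0 / Q m) \<le> W (Suc m) - T (Suc m) / Q m"
      using inv by simp
    moreover have "C / r * (Q m - q0) / Q m \<le> T (Suc m) / Q m"
      using divide_right_mono[OF Tb[of m], of "Q m"] Qpos[of m] by simp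
    moreover have "C / r * (Q m - q0) / Q m = C / r * (1 - q0 / Q m)"
      using Qpos[of m] by (simp add: field_simps)
    moreover have "W (Suc m) \<le> C" using facts[of "Suc m"] by simp
    ultimately show ?thesis by (simp add: algebra_simps)
  qed
  moreover have "C / r * r = C" using r1 by simp
  moreover have "0 < C / r" using C r1 by simp
  ultimately have "real m * (1 - 1 / \<rho>) \<le> r"
    by (metis mult_le_cancel_left_pos)
  moreover have "x / (1 + x) \<le> 1 - 1 / \<rho>"
  proof -
    have "1 + x \<le> \<rho>" by (simp add: \<rho>_def)
    thus ?thesis using x0 by (simp add: field_simps)
  qed
  hence "real m * (x / (1 + x)) \<le> real m * (1 - 1 / \<rho>)" by (rule mult_left_mono) simp
  moreover have "real m * (x / (1 + x)) = lM * real m / (real m + lM)"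
    using m1 by (simp add: x_def field_simps)
  moreover have "r < lM * real m / (real m + lM)" using mm lM0 m1 by (simp add: field_simps)
  ultimately show False by linarith
qed

lemma conc_slope:
  fixes g :: "real \<Rightarrow> real"
  assumes cc: "concave_on {0..D} g" and ab: "0 \<le> a" "a < t" "t < b" "b \<le> D"
  shows "(g b - g a) / (b - a) \<le> (g t - g a) / (t - a)"
    and "(g b - g t) / (b - t) \<le> (g b - g a) / (b - a)"
proof -
  have "concave_on {a..b} g" using convex_on_subset[of "{0..D}" "\<lambda>x. - g x" "{a..b}"] cc ab
    by (auto simp: concave_on_def)
  from concave_onD_Icc'[OF this, of t] ab
  have *: "(g b - g a) / (b - a) * (t - a) + g a \<le> g t" by auto
  define s where "s = (g b - g a) / (b - a)"
  have *: "s * (t - a) \<le> g t - g a" using * by (simp add: s_def)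
  show "(g b - g a) / (b - a) \<le> (g t - g a) / (t - a)"
    using * ab by (simp add: s_def[symmetric] pos_le_divide_eq)
  have "g b - g a = s * (b - a)" using ab by (simp add: s_def)
  hence "g b - g t \<le> s * (b - t)" using * by (simp add: algebra_simps)
  thus "(g b - g t) / (b - t) \<le> (g b - g a) / (b - a)"
    using ab by (simp add: s_def[symmetric] pos_divide_le_eq)
qed

definition phi :: "real \<Rightarrow> real \<Rightarrow> real \<Rightarrow> real \<Rightarrow> real" where
  "phi C L \<alpha> w = (\<alpha> - 1) * L * exp (\<alpha> * w / C)"

definition Phi :: "real \<Rightarrow> real \<Rightarrow> real \<Rightarrow> real \<Rightarrow> real" where
  "Phi C L \<alpha> w = C / \<alpha> * (phi C L \<alpha> w - phi C L \<alpha> 0)"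

lemma phi_ineq:
  assumes "0 < C" "0 < L" "1 < \<alpha>" "a \<le> b"
  shows "Phi C L \<alpha> b - Phi C L \<alpha> a \<le> phi C L \<alpha> b * (b - a)"
    and "phi C L \<alpha> a * (b - a) \<le> Phi C L \<alpha> b - Phi C L \<alpha> a"
proof -
  define k where "k = (\<alpha> - 1) * L"
  have k: "0 < k" using assms by (simp add: k_def)
  define A where "A = \<alpha> * a / C"
  define B where "B = \<alpha> * b / C"
  have BA: "B - A = \<alpha> * (b - a) / C" by (simp add: A_def B_def diff_divide_distrib right_diff_distrib)
  have e: "Phi C L \<alpha> b - Phi C L \<alpha> a = C / \<alpha> * k * (exp B - exp A)"
    by (simp add: Phi_def phi_def k_def A_def B_def algebra_simps)
  have c: "C / \<alpha> * (B - A) = b - a" using assms BA by (simp add: field_simps)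
  have pos: "0 < C / \<alpha> * k" using assms k by simp
  have "exp B - exp A \<le> exp B * (B - A)"
  proof -
    have "1 + (A - B) \<le> exp (A - B)" by (rule exp_ge_add_one_self)
    hence "exp B * (1 + (A - B)) \<le> exp B * exp (A - B)" by simp
    thus ?thesis by (simp add: exp_diff algebra_simps)
  qed
  hence "C / \<alpha> * k * (exp B - exp A) \<le> C / \<alpha> * k * (exp B * (B - A))"
    using pos by (intro mult_left_mono) auto
  also have "\<dots> = k * exp B * (C / \<alpha> * (B - A))" by (simp add: field_simps)
  finally have "C / \<alpha> * k * (exp B - exp A) \<le> k * exp B * (b - a)" by (simp only: c)
  moreover have phib: "phi C L \<alpha> b = k * exp B" by (simp add: phi_def k_def B_def)
  ultimately show "Phi C L \<alpha> b - Phi C L \<alpha> a \<le> phi C L \<alpha> b * (b - a)"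
    using e by simp
  have "exp A * (B - A) \<le> exp B - exp A"
  proof -
    have "1 + (B - A) \<le> exp (B - A)" by (rule exp_ge_add_one_self)
    hence "exp A * (1 + (B - A)) \<le> exp A * exp (B - A)" by simp
    thus ?thesis by (simp add: exp_diff algebra_simps)
  qed
  hence "C / \<alpha> * k * (exp A * (B - A)) \<le> C / \<alpha> * k * (exp B - exp A)"
    using pos by (intro mult_left_mono) auto
  moreover have "C / \<alpha> * k * (exp A * (B - A)) = k * exp A * (C / \<alpha> * (B - A))" by (simp add: field_simps)
  ultimately have "k * exp A * (b - a) \<le> C / \<alpha> * k * (exp B - exp A)" by (simp only: c)
  moreover have "phi C L \<alpha> a = k * exp A" by (simp add: phi_def k_def A_def)
  ultimately show "phi C L \<alpha> a * (b - a) \<le> Phi C L \<alpha> b - Phi C L \<alpha> a"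
    using e by simp
qed

lemma phi_mono:
  assumes "0 < C" "0 < L" "1 < \<alpha>" "a \<le> b"
  shows "phi C L \<alpha> a \<le> phi C L \<alpha> b"
proof -
  have "\<alpha> * a \<le> \<alpha> * b" using assms by simp
  hence "\<alpha> * a / C \<le> \<alpha> * b / C" using assms by (simp add: divide_right_mono)
  hence "exp (\<alpha> * a / C) \<le> exp (\<alpha> * b / C)" by simp
  moreover have "0 \<le> (\<alpha> - 1) * L" using assms by simp
  ultimately show ?thesis unfolding phi_def by (rule mult_left_mono)
qed

lemma phi_pos: "0 < L \<Longrightarrow> 1 < \<alpha> \<Longrightarrow> 0 < phi C L \<alpha> a"
  unfolding phi_def by simp

lemma phi_C:
  assumes "0 < C" "0 < L" "L < U" "1 < \<alpha>" "\<alpha> = ln ((U - L) / (\<alpha> * L - L))"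
  shows "phi C L \<alpha> C = U - L"
proof -
  have p: "0 < \<alpha> * L - L" using assms by (simp add: algebra_simps)
  hence "exp \<alpha> = (U - L) / (\<alpha> * L - L)" using assms
    by (metis divide_pos_pos diff_gt_0_iff_gt exp_ln)
  moreover have "phi C L \<alpha> C = (\<alpha> * L - L) * exp \<alpha>" using assms by (simp add: phi_def algebra_simps)
  ultimately show ?thesis using p assms by simp
qed

lemma phi_0: "phi C L \<alpha> 0 = (\<alpha> - 1) * L" by (simp add: phi_def)

lemma isCont_phi: "C \<noteq> 0 \<Longrightarrow> isCont (\<lambda>t. phi C L \<alpha> (w + t)) y"
  unfolding phi_def by (intro continuous_intros)

lemma concave_sub_lin:
  fixes g :: "real \<Rightarrow> real"
  assumes "concave_on {0..D} g"
  shows "concave_on {0..D} (\<lambda>z. g z - L * z)"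
  using assms unfolding concave_on_iff by (auto simp: algebra_simps)

definition pu :: "real \<Rightarrow> real \<Rightarrow> real \<Rightarrow> real \<Rightarrow> item \<Rightarrow> real \<Rightarrow> real" where
  "pu C L \<alpha> w it y = snd it y - L * y - Phi C L \<alpha> (w + y)"

lemma key_local:
  fixes D :: real and g :: "real \<Rightarrow> real"
  assumes C: "C > 0" and L: "0 < L" "L < U" and a1: "1 < \<alpha>"
    and aeq: "\<alpha> = ln ((U - L) / (\<alpha> * L - L))"
    and v: "valid_item L U (D, g)" and w: "0 \<le> w" "w \<le> C"
    and y: "y \<in> {0..min D (C - w)}"
    and ymax: "\<forall>z\<in>{0..min D (C - w)}. pu C L \<alpha> w (D, g) z \<le> pu C L \<alpha> w (D, g) y"
    and x: "x \<in> {0..D}"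
  shows "g x - L * x - phi C L \<alpha> (w + y) * x \<le> g y - L * y - phi C L \<alpha> (w + y) * y"
proof -
  define f where "f z = g z - L * z" for z
  define c where "c = min D (C - w)"
  define lam where "lam = phi C L \<alpha> (w + y)"
  have D0: "0 < D" and cg: "concave_on {0..D} g"
    and dv: "\<forall>x\<in>{0..D}. \<exists>d. (g has_real_derivative d) (at x within {0..D}) \<and> L \<le> d \<and> d \<le> U"
    using v by (auto simp: valid_item_def Let_def)
  have cf: "concave_on {0..D} f" unfolding f_def by (rule concave_sub_lin[OF cg])
  have hmax: "f z - Phi C L \<alpha> (w + z) \<le> f y - Phi C L \<alpha> (w + y)" if "z \<in> {0..c}" for z
    using ymax that unfolding pu_def f_def c_def by auto
  have yc: "0 \<le> y" "y \<le> c" "y \<le> D" "y \<le> C - w" using y by (auto simp: c_def)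
  have Cn: "C \<noteq> 0" using C by simp
  have main: "f x - lam * x \<le> f y - lam * y"
  proof (cases x y rule: linorder_cases)
    case equal thus ?thesis by simp
  next
    case less
    have ev: "phi C L \<alpha> (w + t) \<le> (f y - f x) / (y - x)" if "x < t" "t < y" for t
    proof -
      have "(f y - f t) / (y - t) \<le> (f y - f x) / (y - x)"
        using conc_slope(2)[OF cf, of x t y] that x yc by auto
      moreover have "f y - f t \<ge> Phi C L \<alpha> (w + y) - Phi C L \<alpha> (w + t)"
        using hmax[of t] that x yc by auto
      moreover have "phi C L \<alpha> (w + t) * (y - t) \<le> Phi C L \<alpha> (w + y) - Phi C L \<alpha> (w + t)"
        using phi_ineq(2)[OF C L(1) a1, of "w + t" "w + y"] that by simp
      ultimately have "phi C L \<alpha> (w + t) * (y - t) \<le> f y - f t" by linarith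
      hence "phi C L \<alpha> (w + t) \<le> (f y - f t) / (y - t)" using that by (simp add: pos_le_divide_eq)
      thus ?thesis using \<open>(f y - f t) / (y - t) \<le> (f y - f x) / (y - x)\<close> by linarith
    qed
    have lim: "((\<lambda>t. phi C L \<alpha> (w + t)) \<longlongrightarrow> phi C L \<alpha> (w + y)) (at_left y)"
      using tendsto_within_subset[OF isContD[OF isCont_phi[OF Cn]]] by auto
    have "phi C L \<alpha> (w + y) \<le> (f y - f x) / (y - x)"
    proof (rule tendsto_upperbound[OF lim])
      show "\<forall>\<^sub>F t in at_left y. phi C L \<alpha> (w + t) \<le> (f y - f x) / (y - x)"
        unfolding eventually_at_left_field using less ev by blast
    qed simp
    hence "lam * (y - x) \<le> f y - f x" using less by (simp add: lam_def pos_le_divide_eq)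
    thus ?thesis by (simp add: algebra_simps)
  next
    case greater
    have "(f x - f y) / (x - y) \<le> lam"
    proof (cases "y < c")
      case True
      have ev: "(f x - f y) / (x - y) \<le> phi C L \<alpha> (w + t)" if "y < t" "t < min x c" for t
      proof -
        have "(f x - f y) / (x - y) \<le> (f t - f y) / (t - y)"
          using conc_slope(1)[OF cf, of y t x] that x yc by auto
        moreover have "f t - f y \<le> Phi C L \<alpha> (w + t) - Phi C L \<alpha> (w + y)"
          using hmax[of t] that yc by auto
        moreover have "Phi C L \<alpha> (w + t) - Phi C L \<alpha> (w + y) \<le> phi C L \<alpha> (w + t) * (t - y)"
          using phi_ineq(1)[OF C L(1) a1, of "w + y" "w + t"] that by simp
        ultimately have "f t - f y \<le> phi C L \<alpha> (w + t) * (t - y)" by linarith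
        hence "(f t - f y) / (t - y) \<le> phi C L \<alpha> (w + t)" using that by (simp add: pos_divide_le_eq)
        thus ?thesis using \<open>(f x - f y) / (x - y) \<le> (f t - f y) / (t - y)\<close> by linarith
      qed
      have lim: "((\<lambda>t. phi C L \<alpha> (w + t)) \<longlongrightarrow> phi C L \<alpha> (w + y)) (at_right y)"
        using tendsto_within_subset[OF isContD[OF isCont_phi[OF Cn]]] by auto
      have "(f x - f y) / (x - y) \<le> phi C L \<alpha> (w + y)"
      proof (rule tendsto_lowerbound[OF lim])
        show "\<forall>\<^sub>F t in at_right y. (f x - f y) / (x - y) \<le> phi C L \<alpha> (w + t)"
          unfolding eventually_at_right_field using greater True ev by (intro exI[of _ "min x c"]) auto
      qed simp
      thus ?thesis by (simp add: lam_def)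
    next
      case False
      hence yc': "y = c" using yc by simp
      have yD: "y < D" using greater x by simp
      hence "y = C - w" using yc' by (simp add: c_def min_def split: if_splits)
      hence "w + y = C" by simp
      hence lamU: "lam = U - L" using phi_C[OF C L a1 aeq] by (simp add: lam_def)
      obtain d where d: "(g has_real_derivative d) (at y within {0..D})" "d \<le> U"
        using bspec[OF dv, of y] yc by auto
      have "((\<lambda>t. (g t - g y) / (t - y)) \<longlongrightarrow> d) (at y within {0..D})"
        using d(1) by (simp add: has_field_derivative_iff)
      hence "((\<lambda>t. (g t - g y) / (t - y)) \<longlongrightarrow> d) (at y within {y..D})"
        by (rule tendsto_within_subset) (use yc in auto)
      hence lim: "((\<lambda>t. (g t - g y) / (t - y)) \<longlongrightarrow> d) (at_right y)"
        using at_within_Icc_at_right[OF yD] by simp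
      have "(g x - g y) / (x - y) \<le> d"
      proof (rule tendsto_lowerbound[OF lim])
        show "\<forall>\<^sub>F t in at_right y. (g x - g y) / (x - y) \<le> (g t - g y) / (t - y)"
          unfolding eventually_at_right_field using greater x yc
          by (intro exI[of _ x]) (auto intro: conc_slope(1)[OF cg])
      qed simp
      hence "(g x - g y) / (x - y) \<le> U" using d by simp
      hence "g x - g y \<le> U * (x - y)" using greater by (simp add: pos_divide_le_eq)
      hence "f x - f y \<le> (U - L) * (x - y)" by (simp add: f_def algebra_simps)
      thus ?thesis using greater lamU by (simp add: pos_divide_le_eq)
    qed
    hence "f x - f y \<le> lam * (x - y)" using greater by (simp add: pos_divide_le_eq)
    thus ?thesis by (simp add: algebra_simps)
  qed
  thus ?thesis by (simp add: f_def lam_def)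
qed

definition pickd :: "real \<Rightarrow> real \<Rightarrow> real \<Rightarrow> real \<Rightarrow> item \<Rightarrow> real" where
  "pickd C L \<alpha> w it = (SOME y. y \<in> {0..min (fst it) (C - w)} \<and>
     (\<forall>z\<in>{0..min (fst it) (C - w)}. pu C L \<alpha> w it z \<le> pu C L \<alpha> w it y))"

primrec Wr :: "real \<Rightarrow> real \<Rightarrow> real \<Rightarrow> item list \<Rightarrow> real" where
  "Wr C L \<alpha> [] = 0"
| "Wr C L \<alpha> (it # rs) = Wr C L \<alpha> rs + pickd C L \<alpha> (Wr C L \<alpha> rs) it"

definition algo :: "real \<Rightarrow> real \<Rightarrow> real \<Rightarrow> online_alg" where
  "algo C L \<alpha> xs = pickd C L \<alpha> (Wr C L \<alpha> (rev (butlast xs))) (last xs)"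

lemma pickd_spec:
  assumes v: "valid_item L U it" and w: "0 \<le> w" "w \<le> C" and Cn: "C \<noteq> 0"
  shows "pickd C L \<alpha> w it \<in> {0..min (fst it) (C - w)} \<and>
     (\<forall>z\<in>{0..min (fst it) (C - w)}. pu C L \<alpha> w it z \<le> pu C L \<alpha> w it (pickd C L \<alpha> w it))"
proof -
  obtain D g where it: "it = (D, g)" by fastforce
  have D0: "0 < D"
    and dv: "\<forall>x\<in>{0..D}. \<exists>d. (g has_real_derivative d) (at x within {0..D}) \<and> L \<le> d \<and> d \<le> U"
    using v it by (auto simp: valid_item_def Let_def)
  have cg: "continuous_on {0..D} g"
    unfolding continuous_on_eq_continuous_within
  proof
    fix x assume "x \<in> {0..D}"
    then obtain d where "(g has_real_derivative d) (at x within {0..D})" using dv by blast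
    thus "continuous (at x within {0..D}) g" by (rule DERIV_continuous)
  qed
  define S where "S = {0..min D (C - w)}"
  have SD: "S \<subseteq> {0..D}" by (auto simp: S_def)
  have cS: "continuous_on S g" using continuous_on_subset[OF cg SD] .
  have "continuous_on S (pu C L \<alpha> w it)"
    unfolding pu_def it Phi_def phi_def snd_conv
    using cS Cn by (intro continuous_intros) auto
  moreover have "compact S" "S \<noteq> {}" using D0 w by (auto simp: S_def)
  ultimately have "\<exists>y\<in>S. \<forall>z\<in>S. pu C L \<alpha> w it z \<le> pu C L \<alpha> w it y"
    by (intro continuous_attains_sup) auto
  hence "\<exists>y. y \<in> {0..min (fst it) (C - w)} \<and> (\<forall>z\<in>{0..min (fst it) (C - w)}. pu C L \<alpha> w it z \<le> pu C L \<alpha> w it y)"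
    by (auto simp: S_def it)
  thus ?thesis unfolding pickd_def by (rule someI_ex)
qed

lemma alg_props:
  fixes C L U \<alpha> :: real
  assumes C: "C > 0" and vI: "valid_instance L U I"
  defines "d \<equiv> online_decisions (algo C L \<alpha>) I"
  defines "wv \<equiv> \<lambda>n. \<Sum>k<n. d k"
  shows "\<And>n. n < length I \<Longrightarrow> d n = pickd C L \<alpha> (wv n) (I ! n)"
    and "\<And>n. n \<le> length I \<Longrightarrow> 0 \<le> wv n \<and> wv n \<le> C"
proof -
  have dn: "d n = pickd C L \<alpha> (Wr C L \<alpha> (rev (take n I))) (I ! n)" if "n < length I" for n
    using that by (simp add: d_def online_decisions_def algo_def take_Suc_conv_app_nth)
  have vn: "valid_item L U (I ! n)" if "n < length I" for n
    using vI that by (auto simp: valid_instance_def)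
  have *: "n \<le> length I \<longrightarrow> Wr C L \<alpha> (rev (take n I)) = wv n \<and> 0 \<le> wv n \<and> wv n \<le> C" for n
  proof (induction n)
    case 0 thus ?case using C by (simp add: wv_def)
  next
    case (Suc n)
    show ?case
    proof
      assume n: "Suc n \<le> length I"
      hence IH: "Wr C L \<alpha> (rev (take n I)) = wv n" "0 \<le> wv n" "wv n \<le> C" using Suc by auto
      have dd: "d n = pickd C L \<alpha> (wv n) (I ! n)" using dn[of n] n IH by simp
      have "d n \<in> {0..min (fst (I ! n)) (C - wv n)}"
        using pickd_spec[OF vn IH(2,3)] n C dd by auto
      moreover have "Wr C L \<alpha> (rev (take (Suc n) I)) = wv n + d n"
        using n IH dd by (simp add: take_Suc_conv_app_nth)
      moreover have "wv (Suc n) = wv n + d n" by (simp add: wv_def)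
      ultimately show "Wr C L \<alpha> (rev (take (Suc n) I)) = wv (Suc n) \<and> 0 \<le> wv (Suc n) \<and> wv (Suc n) \<le> C"
        using IH by auto
    qed
  qed
  show "\<And>n. n < length I \<Longrightarrow> d n = pickd C L \<alpha> (wv n) (I ! n)"
    using dn * by auto
  show "\<And>n. n \<le> length I \<Longrightarrow> 0 \<le> wv n \<and> wv n \<le> C" using * by auto
qed

lemma upper:
  fixes C L U \<alpha> :: real
  assumes C: "C > 0" and L: "0 < L" "L < U" and a1: "1 < \<alpha>"
    and aeq: "\<alpha> = ln ((U - L) / (\<alpha> * L - L))"
    and vI: "valid_instance L U I"
  shows "OPT C L I \<le> \<alpha> * ALG C L (algo C L \<alpha>) I" and "0 < ALG C L (algo C L \<alpha>) I"
proof -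
  define d where "d = online_decisions (algo C L \<alpha>) I"
  define wv where "wv = (\<lambda>n. \<Sum>k<n. d k)"
  define N where "N = length I"
  define f where "f n z = snd (I ! n) z - L * z" for n z
  have Cn: "C \<noteq> 0" using C by simp
  have dn: "d n = pickd C L \<alpha> (wv n) (I ! n)" if "n < N" for n
    using alg_props(1)[OF C vI, of n \<alpha>] that by (simp add: d_def wv_def N_def)
  have wb: "0 \<le> wv n \<and> wv n \<le> C" if "n \<le> N" for n
    using alg_props(2)[OF C vI, of n \<alpha>] that by (simp add: d_def wv_def N_def)
  have vn: "valid_item L U (I ! n)" if "n < N" for n
    using vI that by (auto simp: valid_instance_def N_def)
  have spec: "d n \<in> {0..min (fst (I ! n)) (C - wv n)} \<and>
     (\<forall>z\<in>{0..min (fst (I ! n)) (C - wv n)}. pu C L \<alpha> (wv n) (I ! n) z \<le> pu C L \<alpha> (wv n) (I ! n) (d n))"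
    if "n < N" for n
    using pickd_spec[OF vn[OF that] _ _ Cn, of "wv n" \<alpha>] wb[of n] that dn[OF that] by auto
  have wS: "wv (Suc n) = wv n + d n" for n by (simp add: wv_def)
  have d0: "0 \<le> d n" if "n < N" for n using spec[OF that] by auto
  have wmono: "wv n \<le> wv N" if "n \<le> N" for n
    unfolding wv_def using that d0 by (intro sum_mono2) auto
  have gain: "Phi C L \<alpha> (wv (Suc n)) - Phi C L \<alpha> (wv n) \<le> f n (d n)" if "n < N" for n
  proof -
    have g0: "snd (I ! n) 0 = 0" using vn[OF that] by (auto simp: valid_item_def Let_def)
    have "0 \<in> {0..min (fst (I ! n)) (C - wv n)}"
      using vn[OF that] wb[of n] that by (auto simp: valid_item_def Let_def)
    hence "pu C L \<alpha> (wv n) (I ! n) 0 \<le> pu C L \<alpha> (wv n) (I ! n) (d n)" using spec[OF that] by blast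
    thus ?thesis using g0 by (simp add: pu_def f_def wS)
  qed
  have loc: "f n x - phi C L \<alpha> (wv (Suc n)) * x \<le> f n (d n) - phi C L \<alpha> (wv (Suc n)) * d n"
    if "n < N" "x \<in> {0..fst (I ! n)}" for n x
  proof -
    obtain D g where Ig: "I ! n = (D, g)" by fastforce
    have "g x - L * x - phi C L \<alpha> (wv n + d n) * x \<le> g (d n) - L * d n - phi C L \<alpha> (wv n + d n) * d n"
      using key_local[OF C L a1 aeq _ _ _ _ _ , of D g "wv n" "d n" x] vn[OF that(1)] wb[of n] spec[OF that(1)] that Ig
      by auto
    thus ?thesis by (simp add: f_def Ig wS)
  qed
  have objeq: "objective C L I x = L * C + (\<Sum>n<N. f n (x n))" for x
    unfolding objective_def f_def N_def by (simp add: sum_subtractf sum_distrib_left algebra_simps)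
  have ALGeq: "ALG C L (algo C L \<alpha>) I = L * C + (\<Sum>n<N. f n (d n))"
    unfolding ALG_def d_def[symmetric] by (rule objeq)
  have dual: "L * C + phi C L \<alpha> (wv k) * C + (\<Sum>n<k. f n (d n) - phi C L \<alpha> (wv (Suc n)) * d n)
      \<le> \<alpha> * (L * C + (\<Sum>n<k. f n (d n)))" if "k \<le> N" for k
    using that
  proof (induction k)
    case 0
    show ?case by (simp add: wv_def phi_0 algebra_simps)
  next
    case (Suc k)
    hence k: "k < N" by simp
    have IH: "L * C + phi C L \<alpha> (wv k) * C + (\<Sum>n<k. f n (d n) - phi C L \<alpha> (wv (Suc n)) * d n)
      \<le> \<alpha> * (L * C + (\<Sum>n<k. f n (d n)))" using Suc by simp
    define a where "a = wv k"
    define b where "b = wv (Suc k)"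
    have ba: "b - a = d k" by (simp add: a_def b_def wS)
    have ab: "a \<le> b" using ba d0[OF k] by simp
    have dP: "Phi C L \<alpha> b - Phi C L \<alpha> a = C / \<alpha> * (phi C L \<alpha> b - phi C L \<alpha> a)"
      by (simp add: Phi_def algebra_simps)
    hence dP': "C * (phi C L \<alpha> b - phi C L \<alpha> a) = \<alpha> * (Phi C L \<alpha> b - Phi C L \<alpha> a)"
      using a1 by (simp add: field_simps)
    have i1: "Phi C L \<alpha> b - Phi C L \<alpha> a \<le> phi C L \<alpha> b * (b - a)"
      using phi_ineq(1)[OF C L(1) a1 ab] .
    have i2: "Phi C L \<alpha> b - Phi C L \<alpha> a \<le> f k (d k)" using gain[OF k] by (simp add: a_def b_def)
    have step: "C * (phi C L \<alpha> b - phi C L \<alpha> a) + (f k (d k) - phi C L \<alpha> b * d k) \<le> \<alpha> * f k (d k)"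
    proof -
      have "(\<alpha> - 1) * (Phi C L \<alpha> b - Phi C L \<alpha> a) \<le> (\<alpha> - 1) * f k (d k)"
        using i2 a1 by (intro mult_left_mono) auto
      thus ?thesis using dP' i1 ba by (simp add: algebra_simps)
    qed
    show ?case using IH step by (simp add: a_def b_def algebra_simps)
  qed
  have bound: "objective C L I x \<le> L * C + phi C L \<alpha> (wv N) * C + (\<Sum>n<N. f n (d n) - phi C L \<alpha> (wv (Suc n)) * d n)"
    if fx: "feasible_alloc C I x" for x
  proof -
    have x: "\<forall>n<N. 0 \<le> x n \<and> x n \<le> fst (I ! n)" "(\<Sum>n<N. x n) \<le> C"
      using fx by (auto simp: feasible_alloc_def N_def)
    define lamN where "lamN = phi C L \<alpha> (wv N)"
    have lp: "0 < lamN" using phi_pos[OF L(1) a1] by (simp add: lamN_def)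
    have "(\<Sum>n<N. f n (x n)) = (\<Sum>n<N. f n (x n) - lamN * x n) + lamN * (\<Sum>n<N. x n)"
      by (simp add: sum_subtractf sum_distrib_left)
    also have "\<dots> \<le> (\<Sum>n<N. f n (d n) - phi C L \<alpha> (wv (Suc n)) * d n) + lamN * C"
    proof (rule add_mono)
      show "lamN * (\<Sum>n<N. x n) \<le> lamN * C" using lp x(2) by simp
      show "(\<Sum>n<N. f n (x n) - lamN * x n) \<le> (\<Sum>n<N. f n (d n) - phi C L \<alpha> (wv (Suc n)) * d n)"
      proof (rule sum_mono)
        fix n assume "n \<in> {..<N}"
        hence n: "n < N" by simp
        have "phi C L \<alpha> (wv (Suc n)) \<le> lamN" unfolding lamN_def
          using phi_mono[OF C L(1) a1 wmono[of "Suc n"]] n by simp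
        hence "phi C L \<alpha> (wv (Suc n)) * x n \<le> lamN * x n" using x(1) n by (simp add: mult_right_mono)
        moreover have "f n (x n) - phi C L \<alpha> (wv (Suc n)) * x n \<le> f n (d n) - phi C L \<alpha> (wv (Suc n)) * d n"
          using loc[OF n, of "x n"] x(1) n by simp
        ultimately show "f n (x n) - lamN * x n \<le> f n (d n) - phi C L \<alpha> (wv (Suc n)) * d n" by linarith
      qed
    qed
    finally show ?thesis unfolding objeq lamN_def by (simp add: algebra_simps)
  qed
  have "OPT C L I \<le> L * C + phi C L \<alpha> (wv N) * C + (\<Sum>n<N. f n (d n) - phi C L \<alpha> (wv (Suc n)) * d n)"
    unfolding OPT_def
  proof (rule cSup_least)
    have "0 < fst (I ! n)" if "n < N" for n using vn[OF that] by (auto simp: valid_item_def Let_def)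
    hence "feasible_alloc C I (\<lambda>_. 0)" using C by (auto simp: feasible_alloc_def less_imp_le N_def)
    thus "objective C L I ` {y. feasible_alloc C I y} \<noteq> {}" by blast
  qed (use bound in auto)
  also have "\<dots> \<le> \<alpha> * (L * C + (\<Sum>n<N. f n (d n)))" using dual by simp
  finally show "OPT C L I \<le> \<alpha> * ALG C L (algo C L \<alpha>) I" using ALGeq by simp
  have "0 \<le> (\<Sum>n<N. f n (d n))"
  proof (rule sum_nonneg)
    fix n assume "n \<in> {..<N}"
    hence n: "n < N" by simp
    have "0 \<le> phi C L \<alpha> (wv n) * (wv (Suc n) - wv n)"
      using phi_pos[OF L(1) a1, of C "wv n"] d0[OF n] by (simp add: wS)
    also have "\<dots> \<le> Phi C L \<alpha> (wv (Suc n)) - Phi C L \<alpha> (wv n)"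
      using phi_ineq(2)[OF C L(1) a1, of "wv n" "wv (Suc n)"] d0[OF n] by (simp add: wS)
    finally show "0 \<le> f n (d n)" using gain[OF n] by linarith
  qed
  thus "0 < ALG C L (algo C L \<alpha>) I" using ALGeq mult_pos_pos[OF L(1) C] by linarith
qed

lemma alg_feasible1:
  fixes C L U \<alpha> :: real
  assumes C: "C > 0" and vI: "valid_instance L U I"
  shows "feasible_alloc C I (online_decisions (algo C L \<alpha>) I)"
proof -
  define d where "d = online_decisions (algo C L \<alpha>) I"
  define wv where "wv = (\<lambda>n. \<Sum>k<n. d k)"
  have "0 \<le> d n \<and> d n \<le> fst (I ! n)" if "n < length I" for n
  proof -
    have "valid_item L U (I ! n)" using vI that by (auto simp: valid_instance_def)
    moreover have "0 \<le> wv n \<and> wv n \<le> C" using alg_props(2)[OF C vI, of n \<alpha>] that by (simp add: d_def wv_def)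
    ultimately have "pickd C L \<alpha> (wv n) (I ! n) \<in> {0..min (fst (I ! n)) (C - wv n)}"
      using pickd_spec[of L U "I ! n" "wv n" C \<alpha>] C by auto
    moreover have "d n = pickd C L \<alpha> (wv n) (I ! n)"
      using alg_props(1)[OF C vI, of n \<alpha>] that by (simp add: d_def wv_def)
    ultimately show ?thesis by auto
  qed
  moreover have "(\<Sum>n<length I. d n) \<le> C"
    using alg_props(2)[OF C vI, of "length I" \<alpha>] by (simp add: d_def)
  ultimately show ?thesis
    unfolding feasible_alloc_def d_def by auto
qed

lemma alg_feasible:
  fixes C L U \<alpha> :: real
  assumes C: "C > 0"
  shows "feasible_online C L U (algo C L \<alpha>)"
  unfolding feasible_online_def using alg_feasible1[OF C] by blast

theorem corollary2:
  fixes C L U :: real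
  assumes "C > 0" and "0 < L" and "L < U"
  shows "(\<exists>!\<alpha>. \<alpha> > 1 \<and> \<alpha> = ln ((U - L) / (\<alpha> * L - L))) \<and>
         (\<forall>\<alpha>. \<alpha> > 1 \<and> \<alpha> = ln ((U - L) / (\<alpha> * L - L)) \<longrightarrow>
            (\<exists>A. feasible_online C L U A \<and> competitive_ratio C L U A = ereal \<alpha>) \<and>
            (\<forall>A. feasible_online C L U A \<longrightarrow> ereal \<alpha> \<le> competitive_ratio C L U A))"
proof -
  have part1: "\<exists>!\<alpha>. \<alpha> > 1 \<and> \<alpha> = ln ((U - L) / (\<alpha> * L - L))"
    using alpha_exists[OF assms(2,3)] .
  have part2: "(\<exists>A. feasible_online C L U A \<and> competitive_ratio C L U A = ereal \<alpha>) \<and>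
            (\<forall>A. feasible_online C L U A \<longrightarrow> ereal \<alpha> \<le> competitive_ratio C L U A)"
    if h: "\<alpha> > 1 \<and> \<alpha> = ln ((U - L) / (\<alpha> * L - L))" for \<alpha>
  proof -
    have lb: "\<forall>A. feasible_online C L U A \<longrightarrow> ereal \<alpha> \<le> competitive_ratio C L U A"
      using lower_bound[OF assms(1,2,3)] h by blast
    have feas: "feasible_online C L U (algo C L \<alpha>)" using alg_feasible[OF assms(1)] .
    have "competitive_ratio C L U (algo C L \<alpha>) \<le> ereal \<alpha>"
      unfolding competitive_ratio_def
    proof (rule SUP_least)
      fix I assume "I \<in> {I. valid_instance L U I}"
      hence vI: "valid_instance L U I" by simp
      have "OPT C L I \<le> \<alpha> * ALG C L (algo C L \<alpha>) I" "0 < ALG C L (algo C L \<alpha>) I"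
        using upper[OF assms(1,2,3) _ _ vI] h by auto
      hence "OPT C L I / ALG C L (algo C L \<alpha>) I \<le> \<alpha>" by (simp add: pos_divide_le_eq)
      thus "ereal (OPT C L I / ALG C L (algo C L \<alpha>) I) \<le> ereal \<alpha>" by simp
    qed
    moreover have "ereal \<alpha> \<le> competitive_ratio C L U (algo C L \<alpha>)" using lb feas by blast
    ultimately have "\<exists>A. feasible_online C L U A \<and> competitive_ratio C L U A = ereal \<alpha>"
      using feas by (intro exI[of _ "algo C L \<alpha>"]) auto
    thus ?thesis using lb by blast
  qed
  show ?thesis using part1 part2 by blast
qed

end
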